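(* Let $G$ be a graph, let $m>1$ and let $k$ be a positive integer. Let $S\subseteq V(G)$ be such that there exists an $m$-matching from $S$ to $V(G)\setminus S$. If $G[V(G)\setminus S]$ is a $(k,m)$-expander, then $G$ is a $(k,(m-1)/2)$-expander.
   Context: An $m$-matching from $S$ to $T$ (disjoint vertex sets) is a subgraph $M$ of $G$ in which every $s\in S$ has exactly $m$ neighbors in $T$ and every vertex of $T$ has degree at most $1$. A graph $G$ is a $(k,d)$-expander if $|N_G(X)\setminus X|\ge d|X|$ for every $X\subseteq V(G)$ with $|X|\le k$, where $N_G(X)$ is the set of vertices adjacent to some vertex of $X$. *)

theory Defs
  imports Complex_Main
begin

definition graph :: "'a set \<Rightarrow> ('a \<Rightarrow> 'a \<Rightarrow> bool) \<Rightarrow> bool" where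
  "graph V E \<longleftrightarrow> finite V \<and> (\<forall>u v. E u v \<longrightarrow> u \<in> V \<and> v \<in> V) \<and>
     (\<forall>u v. E u v \<longrightarrow> E v u) \<and> (\<forall>v. \<not> E v v)"

definition nbhd :: "'a set \<Rightarrow> ('a \<Rightarrow> 'a \<Rightarrow> bool) \<Rightarrow> 'a set \<Rightarrow> 'a set" where
  "nbhd V E X = {v \<in> V. \<exists>x \<in> X. E x v}"

definition induced :: "('a \<Rightarrow> 'a \<Rightarrow> bool) \<Rightarrow> 'a set \<Rightarrow> ('a \<Rightarrow> 'a \<Rightarrow> bool)" where
  "induced E W = (\<lambda>u v. E u v \<and> u \<in> W \<and> v \<in> W)"

definition expander :: "'a set \<Rightarrow> ('a \<Rightarrow> 'a \<Rightarrow> bool) \<Rightarrow> nat \<Rightarrow> real \<Rightarrow> bool" where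
  "expander V E k d \<longleftrightarrow>
     (\<forall>X. X \<subseteq> V \<and> card X \<le> k \<longrightarrow> real (card (nbhd V E X - X)) \<ge> d * real (card X))"

definition m_matching ::
  "'a set \<Rightarrow> ('a \<Rightarrow> 'a \<Rightarrow> bool) \<Rightarrow> nat \<Rightarrow> 'a set \<Rightarrow> 'a set \<Rightarrow> ('a \<Rightarrow> 'a \<Rightarrow> bool) \<Rightarrow> bool" where
  "m_matching V E m S T M \<longleftrightarrow>
     (\<forall>u v. M u v \<longrightarrow> E u v) \<and> (\<forall>u v. M u v \<longrightarrow> M v u) \<and>
     (\<forall>s \<in> S. card {t \<in> T. M s t} = m) \<and>
     (\<forall>t \<in> T. card {u \<in> V. M t u} \<le> 1)"

end

theory Submission
  imports Defs
begin

theorem lemma14: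
  fixes V :: "'a set" and E :: "'a \<Rightarrow> 'a \<Rightarrow> bool" and S :: "'a set" and m k :: nat
  assumes "graph V E"
    and "m > 1" and "k > 0"
    and "S \<subseteq> V"
    and "\<exists>M. m_matching V E m S (V - S) M"
    and "expander (V - S) (induced E (V - S)) k (real m)"
  shows "expander V E k ((real m - 1) / 2)"
  unfolding expander_def
proof (intro allI impI)
  fix X assume X: "X \<subseteq> V \<and> card X \<le> k"
  define T where "T = V - S"
  define A where "A = X \<inter> S"
  define B where "B = X - S"
  obtain M where M: "m_matching V E m S T M" using assms(5) T_def by auto
  have finV: "finite V" and EV: "\<And>u v. E u v \<Longrightarrow> u \<in> V \<and> v \<in> V"
    using assms(1) unfolding graph_def by auto
  have MS: "\<And>u v. M u v \<Longrightarrow> M v u" and ME: "\<And>u v. M u v \<Longrightarrow> E u v"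
    and Mdeg: "\<And>s. s \<in> S \<Longrightarrow> card {t \<in> T. M s t} = m"
    and Mt: "\<And>t. t \<in> T \<Longrightarrow> card {u \<in> V. M t u} \<le> 1"
    using M unfolding m_matching_def by auto
  define N where "N = nbhd V E X - X"
  have finN: "finite N" unfolding N_def nbhd_def using finV by auto
  have finX: "finite X" using X finV finite_subset by blast
  have XAB: "X = A \<union> B" "A \<inter> B = {}" unfolding A_def B_def by auto
  have cX: "card X = card A + card B" using XAB finX by (simp add: card_Un_disjoint)
  have finA: "finite A" "finite B" using finX XAB by auto
  have BT: "B \<subseteq> T" "card B \<le> k" using X finX unfolding B_def T_def
    by (auto intro: order_trans[OF card_mono])
  have e1: "real (card (nbhd T (induced E T) B - B)) \<ge> real m * real (card B)"
    using assms(6) BT unfolding expander_def T_def by auto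
  have s1: "nbhd T (induced E T) B - B \<subseteq> N"
    unfolding N_def nbhd_def induced_def T_def using XAB unfolding A_def B_def by auto
  have c1: "real m * real (card B) \<le> real (card N)"
    using e1 card_mono[OF finN s1] by linarith
  define U where "U = (\<Union>s\<in>A. {t \<in> T. M s t})"
  have disj: "\<forall>s1\<in>A. \<forall>s2\<in>A. s1 \<noteq> s2 \<longrightarrow> {t \<in> T. M s1 t} \<inter> {t \<in> T. M s2 t} = {}"
  proof (intro ballI impI)
    fix s1 s2 assume s: "s1 \<in> A" "s2 \<in> A" "s1 \<noteq> s2"
    show "{t \<in> T. M s1 t} \<inter> {t \<in> T. M s2 t} = {}"
    proof (rule ccontr)
      assume "{t \<in> T. M s1 t} \<inter> {t \<in> T. M s2 t} \<noteq> {}"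
      then obtain t where t: "t \<in> T" "M s1 t" "M s2 t" by auto
      have "{s1, s2} \<subseteq> {u \<in> V. M t u}" using t MS ME EV by blast
      hence "card {s1, s2} \<le> card {u \<in> V. M t u}"
        using finV by (intro card_mono) auto
      with Mt[OF t(1)] s(3) show False by simp
    qed
  qed
  have finU: "\<And>s. finite {t \<in> T. M s t}" using finV unfolding T_def by auto
  have cU: "card U = m * card A"
    unfolding U_def using card_UN_disjoint[OF finA(1) _ disj] finU Mdeg
    unfolding A_def by simp
  have finUU: "finite U" unfolding U_def using finA finU by auto
  have s2: "U - B \<subseteq> N"
    unfolding U_def N_def nbhd_def using ME EV XAB unfolding A_def B_def T_def by blast
  have "card U - card B \<le> card (U - B)" using finA(2) by (rule diff_card_le_card_Diff)
  hence "real (card U) - real (card B) \<le> real (card (U - B))" by linarith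
  with card_mono[OF finN s2] cU
  have c2: "real m * real (card A) - real (card B) \<le> real (card N)" by simp
  have "(real m - 1) / 2 * real (card X) = (real m * real (card A) - real (card B) + real m * real (card B) - real (card A)) / 2"
    using cX by (simp add: algebra_simps)
  also have "\<dots> \<le> real (card N)" using c1 c2 by simp
  finally show "(real m - 1) / 2 * real (card X) \<le> real (card (nbhd V E X - X))"
    unfolding N_def .
qed

end
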